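(* Let $K$ be a finite simplicial complex, let $\sigma_i^{(q)}$ be a $q$-simplex and $\sigma_j^{(q')}$ a $q'$-simplex of $K$, and suppose that $\sigma_i^{(q)}\sim_{L_{p^*}}\sigma_j^{(q')}$ for some integer $p\ge 0$. Put $p'=q+q'-p$. If $\sigma_i^{(q)}\not\sim_{U_{p'}}\sigma_j^{(q')}$, then $\sigma_i^{(q)}\not\sim_{U_{p'+h}}\sigma_j^{(q')}$ for every integer $h\geq 1$.
   Context: $K$ is a finite abstract simplicial complex: a finite collection of nonempty finite vertex sets (simplices) closed under taking nonempty subsets. A $q$-simplex $\sigma^{(q)}$ has $q+1$ vertices; a face of a simplex is a simplex of $K$ contained in it as a set (a simplex is a face of itself). $p$-lower adjacency: $\sigma^{(q)}\sim_{L_p}\sigma^{(q')}$ iff there is a $p$-simplex $\tau^{(p)}$ of $K$ with $\tau^{(p)}\subseteq\sigma^{(q)}$ and $\tau^{(p)}\subseteq\sigma^{(q')}$. Strict $p$-lower adjacency: $\sigma^{(q)}\sim_{L_{p^*}}\sigma^{(q')}$ iff $\sigma^{(q)}\sim_{L_p}\sigma^{(q')}$ and $\sigma^{(q)}\not\sim_{L_{p+1}}\sigma^{(q')}$. $p$-upper adjacency: $\sigma^{(q)}\sim_{U_p}\sigma^{(q')}$ iff there is a $p$-simplex $\tau^{(p)}$ of $K$ with $\sigma^{(q)}\subseteq\tau^{(p)}$ and $\sigma^{(q')}\subseteq\tau^{(p)}$. *)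

theory Defs
  imports Main
begin

definition simplicial_complex :: "'a set set \<Rightarrow> bool" where
  "simplicial_complex K \<longleftrightarrow> finite K \<and>
     (\<forall>\<sigma>\<in>K. finite \<sigma> \<and> \<sigma> \<noteq> {}) \<and>
     (\<forall>\<sigma>\<in>K. \<forall>\<tau>. \<tau> \<subseteq> \<sigma> \<and> \<tau> \<noteq> {} \<longrightarrow> \<tau> \<in> K)"

definition is_simplex :: "'a set set \<Rightarrow> nat \<Rightarrow> 'a set \<Rightarrow> bool" where
  "is_simplex K q \<sigma> \<longleftrightarrow> \<sigma> \<in> K \<and> card \<sigma> = q + 1"

definition lower_adj :: "'a set set \<Rightarrow> nat \<Rightarrow> 'a set \<Rightarrow> 'a set \<Rightarrow> bool" where
  "lower_adj K p \<sigma> \<sigma>' \<longleftrightarrow> (\<exists>\<tau>. is_simplex K p \<tau> \<and> \<tau> \<subseteq> \<sigma> \<and> \<tau> \<subseteq> \<sigma>')"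

definition strict_lower_adj :: "'a set set \<Rightarrow> nat \<Rightarrow> 'a set \<Rightarrow> 'a set \<Rightarrow> bool" where
  "strict_lower_adj K p \<sigma> \<sigma>' \<longleftrightarrow> lower_adj K p \<sigma> \<sigma>' \<and> \<not> lower_adj K (p + 1) \<sigma> \<sigma>'"

definition upper_adj :: "'a set set \<Rightarrow> nat \<Rightarrow> 'a set \<Rightarrow> 'a set \<Rightarrow> bool" where
  "upper_adj K p \<sigma> \<sigma>' \<longleftrightarrow> (\<exists>\<tau>. is_simplex K p \<tau> \<and> \<sigma> \<subseteq> \<tau> \<and> \<sigma>' \<subseteq> \<tau>)"

end

theory Submission
  imports Defs
begin

theorem mainTheorem1:
  fixes K :: "'a set set" and \<sigma>i \<sigma>j :: "'a set" and q q' p :: nat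
  assumes "simplicial_complex K"
    and "is_simplex K q \<sigma>i" and "is_simplex K q' \<sigma>j"
    and "strict_lower_adj K p \<sigma>i \<sigma>j"
    and "\<not> upper_adj K (q + q' - p) \<sigma>i \<sigma>j"
  shows "\<forall>h::nat. h \<ge> 1 \<longrightarrow> \<not> upper_adj K (q + q' - p + h) \<sigma>i \<sigma>j"
proof (intro allI impI notI)
  fix h :: nat
  assume h: "h \<ge> 1" and up: "upper_adj K (q + q' - p + h) \<sigma>i \<sigma>j"
  have all: "finite K \<and> (\<forall>\<sigma>\<in>K. finite \<sigma> \<and> \<sigma> \<noteq> {}) \<and> (\<forall>\<sigma>\<in>K. \<forall>\<tau>. \<tau> \<subseteq> \<sigma> \<and> \<tau> \<noteq> {} \<longrightarrow> \<tau> \<in> K)"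
    using assms(1) unfolding simplicial_complex_def .
  have fin2: "\<forall>\<sigma>\<in>K. finite \<sigma> \<and> \<sigma> \<noteq> {}" using all by (rule conjE) (erule conjE)
  have cl: "\<forall>\<sigma>\<in>K. \<forall>\<tau>. \<tau> \<subseteq> \<sigma> \<and> \<tau> \<noteq> {} \<longrightarrow> \<tau> \<in> K" using all by (rule conjE) (erule conjE)
  have fin: "True" "\<forall>\<sigma>\<in>K. finite \<sigma> \<and> \<sigma> \<noteq> {}" using fin2 by simp_all
  have si: "\<sigma>i \<in> K" "card \<sigma>i = q + 1" and sj: "\<sigma>j \<in> K" "card \<sigma>j = q' + 1"
    using assms(2,3) unfolding is_simplex_def by auto
  have fi: "finite \<sigma>i" using fin(2) si(1) by blast
  have fj: "finite \<sigma>j" using fin(2) sj(1) by blast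
  obtain \<tau> where t: "\<tau> \<in> K" "card \<tau> = p + 1" "\<tau> \<subseteq> \<sigma>i" "\<tau> \<subseteq> \<sigma>j"
    using assms(4) unfolding strict_lower_adj_def lower_adj_def is_simplex_def by auto
  have nl: "\<not> lower_adj K (p+1) \<sigma>i \<sigma>j" using assms(4) unfolding strict_lower_adj_def by auto
  have fI: "finite (\<sigma>i \<inter> \<sigma>j)" using fi by auto
  have ge: "card (\<sigma>i \<inter> \<sigma>j) \<ge> p + 1"
  proof -
    have "\<tau> \<subseteq> \<sigma>i \<inter> \<sigma>j" using t(3,4) by (rule Int_greatest)
    from card_mono[OF fI this] show ?thesis using t(2) by simp
  qed
  have le: "card (\<sigma>i \<inter> \<sigma>j) \<le> p + 1"
  proof (rule ccontr)
    assume "\<not> ?thesis"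
    then have "p + 2 \<le> card (\<sigma>i \<inter> \<sigma>j)" by simp
    then obtain S where S: "S \<subseteq> \<sigma>i \<inter> \<sigma>j" "card S = p + 2"
      using obtain_subset_with_card_n by metis
    have "S \<noteq> {}" using S by auto
    moreover have "S \<subseteq> \<sigma>i" using S(1) by blast
    ultimately have "S \<in> K" using cl si(1) by blast
    then have "lower_adj K (p+1) \<sigma>i \<sigma>j" unfolding lower_adj_def is_simplex_def using S by auto
    then show False using nl by simp
  qed
  have cI: "card (\<sigma>i \<inter> \<sigma>j) = p + 1" using ge le by simp
  have pq: "p \<le> q" "p \<le> q'" using card_mono[OF fi, of "\<sigma>i \<inter> \<sigma>j"] card_mono[OF fj, of "\<sigma>i \<inter> \<sigma>j"] cI si sj by auto
  have cU: "card (\<sigma>i \<union> \<sigma>j) = q + q' - p + 1"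
    using card_Un_Int[OF fi fj] cI si sj pq by simp
  obtain T where T: "T \<in> K" "\<sigma>i \<subseteq> T" "\<sigma>j \<subseteq> T"
    using up unfolding upper_adj_def is_simplex_def by auto
  have "\<sigma>i \<noteq> {}" using si(2) by (metis card.empty zero_neq_one add_eq_0_iff_both_eq_0)
  then have "\<sigma>i \<union> \<sigma>j \<noteq> {}" by simp
  moreover have "\<sigma>i \<union> \<sigma>j \<subseteq> T" using T by blast
  ultimately have "\<sigma>i \<union> \<sigma>j \<in> K" using cl T(1) by blast
  then have "upper_adj K (q + q' - p) \<sigma>i \<sigma>j"
    unfolding upper_adj_def is_simplex_def using cU by auto
  then show False using assms(5) by simp
qed

end
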